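(* Let $\theta_1,\dots,\theta_M$ be i.i.d. $\mathrm{Dir}_K(\alpha)$ with $\alpha\in\mathbb R_+^K$, and $p_m=\sum_k\beta_k\theta_{mk}$. Then for any $i\in\{1,\dots,K\}$ and any $0<\epsilon<\max_{k\ne i}a_{i,k}$, $$\mathbb P\big(p_m\notin\mathscr B(\beta_i,\epsilon)\ \forall m\in\{1,\dots,M\}\big)\le\left(\frac{\int_0^{1-\epsilon/\max_{k\ne i}a_{i,k}}\theta^{\alpha_i-1}(1-\theta)^{\sum_{j\ne i}\alpha_j-1}d\theta}{\int_0^1\theta^{\alpha_i-1}(1-\theta)^{\sum_{j\ne i}\alpha_j-1}d\theta}\right)^M.$$
   Context: $\beta_1,\dots,\beta_K\in\Delta^{V-1}$ are topics, $a_{i,k}=\|\beta_i-\beta_k\|_2$, and $\mathscr B(x,\epsilon)$ is the open Euclidean ball of radius $\epsilon$ centered at $x$. *)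

theory Defs
  imports "HOL-Probability.Probability"
begin

text \<open>Components are indexed by 1..K; a point of the simplex is an (extensional)
  function on {1..K}. Following the standard definition, the first K-1
  coordinates have the Lebesgue density
  Gamma(sum alpha)/prod Gamma(alpha_k) * prod_k x_k^(alpha_k - 1)
  on the open simplex, and the last coordinate is 1 minus their sum.\<close>

definition dirichlet_density :: "nat \<Rightarrow> (nat \<Rightarrow> real) \<Rightarrow> (nat \<Rightarrow> real) \<Rightarrow> real" where
  "dirichlet_density K \<alpha> x =
     (if (\<forall>k\<in>{1..<K}. 0 < x k) \<and> (\<Sum>k\<in>{1..<K}. x k) < 1
      then Gamma (\<Sum>k\<in>{1..K}. \<alpha> k) / (\<Prod>k\<in>{1..K}. Gamma (\<alpha> k))
           * (\<Prod>k\<in>{1..<K}. x k powr (\<alpha> k - 1))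
           * (1 - (\<Sum>k\<in>{1..<K}. x k)) powr (\<alpha> K - 1)
      else 0)"

definition dirichlet_complete :: "nat \<Rightarrow> (nat \<Rightarrow> real) \<Rightarrow> (nat \<Rightarrow> real)" where
  "dirichlet_complete K x =
     restrict (\<lambda>k. if k = K then 1 - (\<Sum>j\<in>{1..<K}. x j) else x k) {1..K}"

definition dirichlet :: "nat \<Rightarrow> (nat \<Rightarrow> real) \<Rightarrow> (nat \<Rightarrow> real) measure" where
  "dirichlet K \<alpha> =
     distr (density (PiM {1..<K} (\<lambda>_. lborel)) (\<lambda>x. ennreal (dirichlet_density K \<alpha> x)))
           (PiM {1..K} (\<lambda>_. lborel)) (dirichlet_complete K)"

end

theory Submission
  imports Defs
begin


lemma beta_scaled:
  fixes a b s :: real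
  assumes a: "a > 0" and b: "b > 0" and s: "s > 0"
  shows "(\<integral>\<^sup>+y. ennreal (if 0 < y \<and> y < s then y powr (a-1) * (s-y) powr (b-1) else 0) \<partial>lborel)
       = ennreal (s powr (a+b-1) * Beta a b)"
proof -
  let ?f = "\<lambda>y. ennreal (if 0 < y \<and> y < s then y powr (a-1) * (s-y) powr (b-1) else 0)"
  have "(\<integral>\<^sup>+y. ?f y \<partial>lborel) = ennreal \<bar>s\<bar> * (\<integral>\<^sup>+x. ?f (0 + s * x) \<partial>lborel)"
    using s by (intro nn_integral_real_affine) auto
  also have "(\<integral>\<^sup>+x. ?f (0 + s * x) \<partial>lborel) = (\<integral>\<^sup>+x. ennreal (s powr (a+b-2)) *
       ennreal (indicator {0..1} x * (x powr (a-1) * (1-x) powr (b-1))) \<partial>lborel)"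
  proof (intro nn_integral_cong)
    fix x :: real
    show "?f (0 + s * x) = ennreal (s powr (a+b-2)) *
       ennreal (indicator {0..1} x * (x powr (a-1) * (1-x) powr (b-1)))"
    proof (cases "0 < x \<and> x < 1")
      case True
      have "(s*x) powr (a-1) * (s - s*x) powr (b-1) = s powr (a+b-2) * (x powr (a-1) * (1-x) powr (b-1))"
      proof -
        have e: "s - s*x = s*(1-x)" by (simp add: algebra_simps)
        have "(s*x) powr (a-1) * (s*(1-x)) powr (b-1) = (s powr (a-1) * s powr (b-1)) * (x powr (a-1) * (1-x) powr (b-1))"
          using True s by (simp add: powr_mult mult_ac)
        also have "s powr (a-1) * s powr (b-1) = s powr (a+b-2)" by (simp add: powr_add[symmetric])
        finally show ?thesis by (simp add: e)
      qed
      then show ?thesis using True s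
        by (auto simp: ennreal_mult[symmetric] indicator_def zero_less_mult_iff)
    next
      case False
      then have "x \<le> 0 \<or> 1 \<le> x" by auto
      then show ?thesis using s
        by (auto simp: indicator_def zero_less_mult_iff mult_less_cancel_left2)
    qed
  qed
  also have "\<dots> = ennreal (s powr (a+b-2)) * ennreal (Beta a b)"
  proof -
    have "(\<integral>\<^sup>+x. ennreal (indicator {0..1} x * (x powr (a-1) * (1-x) powr (b-1))) \<partial>lborel) = ennreal (Beta a b)"
      by (rule nn_integral_has_integral_lebesgue) (auto intro: has_integral_Beta_real a b)
    then show ?thesis by (subst nn_integral_cmult) auto
  qed
  also have "ennreal \<bar>s\<bar> * (ennreal (s powr (a+b-2)) * ennreal (Beta a b)) = ennreal (s powr (a+b-1) * Beta a b)"
  proof -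
    have "s powr (a+b-1) = s powr (a+b-2) * s powr 1" using powr_add[of s "a+b-2" 1] by (simp add: algebra_simps)
    then have "\<bar>s\<bar> * s powr (a+b-2) = s powr (a+b-1)" using s by simp
    moreover have "Beta a b \<ge> 0" using a b by (simp add: Beta_def)
    ultimately show ?thesis using s by (simp add: ennreal_mult'[symmetric] mult.assoc[symmetric] ennreal_mult[symmetric])
  qed
  finally show ?thesis .
qed

lemma simplex_integral:
  fixes I :: "nat set" and a :: "nat \<Rightarrow> real"
  assumes "finite I" "\<forall>k\<in>I. 0 < a k" "0 < b" "0 < s"
  shows "(\<integral>\<^sup>+x. ennreal (if (\<forall>k\<in>I. 0 < x k) \<and> sum x I < s
            then (\<Prod>k\<in>I. x k powr (a k - 1)) * (s - sum x I) powr (b - 1) else 0) \<partial>PiM I (\<lambda>_. lborel))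
       = ennreal (s powr (sum a I + b - 1) * (\<Prod>k\<in>I. Gamma (a k)) * Gamma b / Gamma (sum a I + b))"
  using assms
proof (induction I arbitrary: b rule: finite_induct)
  case empty
  have "Gamma b > 0" using empty by (simp add: Gamma_real_pos)
  then have "Gamma b \<noteq> 0" by simp
  then show ?case using empty by (simp add: PiM_empty nn_integral_count_space_finite)
next
  case (insert j I b)
  interpret product_sigma_finite "\<lambda>_. lborel" by standard
  have aj: "0 < a j" and aI: "\<forall>k\<in>I. 0 < a k" using insert by auto
  let ?F = "\<lambda>I b x. ennreal (if (\<forall>k\<in>I. 0 < x k) \<and> sum x I < s
            then (\<Prod>k\<in>I. x k powr (a k - 1)) * (s - sum x I) powr (b - 1) else 0)"
  have meas: "?F (insert j I) b \<in> borel_measurable (PiM (insert j I) (\<lambda>_. lborel))"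
    using insert by measurable
  have pt: "?F (insert j I) b (x(j:=y)) = ennreal (if (\<forall>k\<in>I. 0 < x k) \<and> sum x I < s
            then (\<Prod>k\<in>I. x k powr (a k - 1)) else 0) *
          ennreal (if 0 < y \<and> y < (s - sum x I) then y powr (a j - 1) * ((s - sum x I) - y) powr (b - 1) else 0)"
    for x y
  proof -
    have s1: "sum (x(j:=y)) I = sum x I" using insert by (intro sum.cong) auto
    have p1: "(\<Prod>k\<in>I. (x(j:=y)) k powr (a k - 1)) = (\<Prod>k\<in>I. x k powr (a k - 1))"
      using insert by (intro prod.cong) auto
    have "(\<forall>k\<in>insert j I. 0 < (x(j:=y)) k) = (0 < y \<and> (\<forall>k\<in>I. 0 < x k))" using insert by auto
    moreover have "sum (x(j:=y)) (insert j I) = y + sum x I" using insert s1 by simp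
    moreover have "(\<Prod>k\<in>insert j I. (x(j:=y)) k powr (a k - 1)) = y powr (a j - 1) * (\<Prod>k\<in>I. x k powr (a k - 1))"
      using insert p1 by simp
    moreover have "(\<Prod>k\<in>I. x k powr (a k - 1)) \<ge> 0" by (intro prod_nonneg) auto
    ultimately show ?thesis
      by (auto simp: ennreal_mult[symmetric] algebra_simps diff_diff_eq)
  qed
  have "(\<integral>\<^sup>+x. ?F (insert j I) b x \<partial>PiM (insert j I) (\<lambda>_. lborel))
      = (\<integral>\<^sup>+x. \<integral>\<^sup>+y. ?F (insert j I) b (x(j:=y)) \<partial>lborel \<partial>PiM I (\<lambda>_. lborel))"
    using insert meas by (intro product_nn_integral_insert) auto
  also have "\<dots> = (\<integral>\<^sup>+x. ?F I (a j + b) x * ennreal (Beta (a j) b) \<partial>PiM I (\<lambda>_. lborel))"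
  proof (intro nn_integral_cong)
    fix x :: "nat \<Rightarrow> real"
    have "(\<integral>\<^sup>+y. ?F (insert j I) b (x(j:=y)) \<partial>lborel) = ennreal (if (\<forall>k\<in>I. 0 < x k) \<and> sum x I < s
            then (\<Prod>k\<in>I. x k powr (a k - 1)) else 0) *
          (\<integral>\<^sup>+y. ennreal (if 0 < y \<and> y < (s - sum x I) then y powr (a j - 1) * ((s - sum x I) - y) powr (b - 1) else 0) \<partial>lborel)"
      unfolding pt by (subst nn_integral_cmult) auto
    also have "\<dots> = ?F I (a j + b) x * ennreal (Beta (a j) b)"
    proof (cases "(\<forall>k\<in>I. 0 < x k) \<and> sum x I < s")
      case True
      have "(s - sum x I) > 0" using True by simp
      moreover have "(\<Prod>k\<in>I. x k powr (a k - 1)) \<ge> 0" by (intro prod_nonneg) auto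
      moreover have "Beta (a j) b \<ge> 0" using aj insert.prems by (simp add: Beta_def Gamma_real_pos less_imp_le)
      ultimately show ?thesis using aj insert.prems True
        by (subst beta_scaled) (auto simp: ennreal_mult algebra_simps)
    qed auto
    finally show "(\<integral>\<^sup>+y. ?F (insert j I) b (x(j:=y)) \<partial>lborel) = ?F I (a j + b) x * ennreal (Beta (a j) b)" .
  qed
  also have "\<dots> = (\<integral>\<^sup>+x. ?F I (a j + b) x \<partial>PiM I (\<lambda>_. lborel)) * ennreal (Beta (a j) b)"
    using insert by (intro nn_integral_multc) measurable
  also have "\<dots> = ennreal (s powr (sum a I + (a j + b) - 1) * (\<Prod>k\<in>I. Gamma (a k)) * Gamma (a j + b) / Gamma (sum a I + (a j + b))) * ennreal (Beta (a j) b)"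
    using insert.IH[of "a j + b"] aI aj insert.prems by simp
  also have "\<dots> = ennreal (s powr (sum a (insert j I) + b - 1) * (\<Prod>k\<in>insert j I. Gamma (a k)) * Gamma b / Gamma (sum a (insert j I) + b))"
  proof -
    have g: "Gamma (a j + b) > 0" "Gamma (b + a j) \<noteq> 0" using aj insert.prems Gamma_real_pos[of "b + a j"] Gamma_real_pos[of "a j + b"] by linarith+
    have g2: "Gamma (sum a I + (a j + b)) > 0" using aj insert.prems aI
      by (intro Gamma_real_pos add_nonneg_pos sum_nonneg) auto
    have "(\<Prod>k\<in>I. Gamma (a k)) \<ge> 0" using aI by (intro prod_nonneg) (auto intro: less_imp_le Gamma_real_pos)
    moreover have "Beta (a j) b \<ge> 0" using aj insert.prems by (simp add: Beta_def Gamma_real_pos less_imp_le)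
    moreover have "s powr (sum a I + (a j + b) - 1) * (\<Prod>k\<in>I. Gamma (a k)) * Gamma (a j + b) / Gamma (sum a I + (a j + b)) * Beta (a j) b
        = s powr (sum a (insert j I) + b - 1) * (\<Prod>k\<in>insert j I. Gamma (a k)) * Gamma b / Gamma (sum a (insert j I) + b)"
    proof -
      have e1: "sum a (insert j I) + b = sum a I + (a j + b)" using insert.hyps by simp
      have e2: "(\<Prod>k\<in>insert j I. Gamma (a k)) = Gamma (a j) * (\<Prod>k\<in>I. Gamma (a k))" using insert.hyps by simp
      show ?thesis unfolding e1 e2 Beta_def using g(1) by (simp add: field_simps)
    qed
    moreover have "0 \<le> s powr (sum a I + (a j + b) - 1) * (\<Prod>k\<in>I. Gamma (a k)) * Gamma (a j + b) / Gamma (sum a I + (a j + b))"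
      using g g2 calculation(1) by (intro mult_nonneg_nonneg divide_nonneg_pos) auto
    ultimately show ?thesis by (simp add: ennreal_mult[symmetric])
  qed
  finally show ?case .
qed

lemma beta_lbint:
  fixes a b c :: real
  assumes a: "a > 0" and b: "b > 0" and c: "0 \<le> c" "c \<le> 1"
  shows "(\<integral>\<^sup>+t. ennreal (if 0 < t \<and> t < c then t powr (a-1) * (1-t) powr (b-1) else 0) \<partial>lborel)
       = ennreal (LBINT t=0..c. t powr (a-1) * (1-t) powr (b-1))"
proof -
  let ?f = "\<lambda>t::real. t powr (a-1) * (1-t) powr (b-1)"
  have int1: "integrable lborel (\<lambda>t. indicator {0..1} t *\<^sub>R ?f t)"
    using integrable_Beta[OF a b] by (simp add: set_integrable_def)
  have int2: "integrable lborel (\<lambda>t. indicator {0<..<c} t *\<^sub>R ?f t)"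
    by (rule Bochner_Integration.integrable_bound[OF int1]) (use c in \<open>auto simp: indicator_def intro!: AE_I2\<close>)
  have "(LBINT t=0..c. ?f t) = integral\<^sup>L lborel (\<lambda>t. indicator {0<..<c} t *\<^sub>R ?f t)"
    using c by (simp add: interval_integral_Ioo set_lebesgue_integral_def)
  moreover have "(\<integral>\<^sup>+t. ennreal (indicator {0<..<c} t *\<^sub>R ?f t) \<partial>lborel) = ennreal (integral\<^sup>L lborel (\<lambda>t. indicator {0<..<c} t *\<^sub>R ?f t))"
    by (rule nn_integral_eq_integral[OF int2]) (auto simp: indicator_def intro!: AE_I2)
  moreover have "(\<integral>\<^sup>+t. ennreal (if 0 < t \<and> t < c then ?f t else 0) \<partial>lborel) = (\<integral>\<^sup>+t. ennreal (indicator {0<..<c} t *\<^sub>R ?f t) \<partial>lborel)"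
    by (intro nn_integral_cong) (auto simp: indicator_def)
  ultimately show ?thesis by simp
qed

lemma beta_lbint1:
  fixes a b :: real
  assumes a: "a > 0" and b: "b > 0"
  shows "(LBINT t=0..1. t powr (a-1) * (1-t) powr (b-1)) = Beta a b"
proof -
  have "ennreal (LBINT t=0..1. t powr (a-1) * (1-t) powr (b-1)) = 
     (\<integral>\<^sup>+t. ennreal (if 0 < t \<and> t < 1 then t powr (a-1) * (1-t) powr (b-1) else 0) \<partial>lborel)"
    using beta_lbint[OF a b, of 1] by (simp add: one_ereal_def)
  also have "\<dots> = ennreal (1 powr (a+b-1) * Beta a b)"
    using beta_scaled[OF a b, of 1] by simp
  finally have "ennreal (LBINT t=0..1. t powr (a-1) * (1-t) powr (b-1)) = ennreal (Beta a b)" by simp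
  moreover have "Beta a b \<ge> 0" using a b by (simp add: Beta_def Gamma_real_pos less_imp_le)
  moreover have "(LBINT t=0..1. t powr (a-1) * (1-t) powr (b-1)) \<ge> 0"
    by (simp add: interval_integral_Ioo one_ereal_def set_lebesgue_integral_def indicator_def)
  ultimately show ?thesis by simp
qed

lemma marginal:
  fixes I :: "nat set" and a :: "nat \<Rightarrow> real"
  assumes I: "finite I" "j \<notin> I" and apos: "\<forall>k\<in>insert j I. 0 < a k" and b: "0 < b"
  shows "(\<integral>\<^sup>+x. ennreal (if (\<forall>k\<in>insert j I. 0 < x k) \<and> sum x (insert j I) < 1 \<and> x j \<le> c
            then (\<Prod>k\<in>insert j I. x k powr (a k - 1)) * (1 - sum x (insert j I)) powr (b - 1) else 0)
          \<partial>PiM (insert j I) (\<lambda>_. lborel))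
   = ennreal ((\<Prod>k\<in>I. Gamma (a k)) * Gamma b / Gamma (sum a I + b)) *
     (\<integral>\<^sup>+t. ennreal (if 0 < t \<and> t < 1 \<and> t \<le> c then t powr (a j - 1) * (1-t) powr (sum a I + b - 1) else 0) \<partial>lborel)"
proof -
  interpret product_sigma_finite "\<lambda>_. lborel" by standard
  let ?C = "(\<Prod>k\<in>I. Gamma (a k)) * Gamma b / Gamma (sum a I + b)"
  have Cnn: "?C \<ge> 0" using apos b
    by (intro mult_nonneg_nonneg divide_nonneg_pos prod_nonneg add_nonneg_pos sum_nonneg Gamma_real_pos less_imp_le) auto
  let ?F = "\<lambda>x. ennreal (if (\<forall>k\<in>insert j I. 0 < x k) \<and> sum x (insert j I) < 1 \<and> x j \<le> c
            then (\<Prod>k\<in>insert j I. x k powr (a k - 1)) * (1 - sum x (insert j I)) powr (b - 1) else 0)"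
  let ?G = "\<lambda>s x. ennreal (if (\<forall>k\<in>I. 0 < x k) \<and> sum x I < s
            then (\<Prod>k\<in>I. x k powr (a k - 1)) * (s - sum x I) powr (b - 1) else 0)"
  have meas: "?F \<in> borel_measurable (PiM (insert j I) (\<lambda>_. lborel))"
    using I by measurable
  have pt: "?F (x(j:=y)) = ennreal (if 0 < y \<and> y < 1 \<and> y \<le> c then y powr (a j - 1) else 0) * ?G (1-y) x"
    for x y
  proof -
    have s1: "sum (x(j:=y)) I = sum x I" using I by (intro sum.cong) auto
    have p1: "(\<Prod>k\<in>I. (x(j:=y)) k powr (a k - 1)) = (\<Prod>k\<in>I. x k powr (a k - 1))"
      using I by (intro prod.cong) auto
    have "(\<forall>k\<in>insert j I. 0 < (x(j:=y)) k) = (0 < y \<and> (\<forall>k\<in>I. 0 < x k))" using I by auto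
    moreover have "sum (x(j:=y)) (insert j I) = y + sum x I" using I s1 by simp
    moreover have "(\<Prod>k\<in>insert j I. (x(j:=y)) k powr (a k - 1)) = y powr (a j - 1) * (\<Prod>k\<in>I. x k powr (a k - 1))"
      using I p1 by simp
    moreover have "(\<Prod>k\<in>I. x k powr (a k - 1)) \<ge> 0" by (intro prod_nonneg) auto
    moreover have "(\<forall>k\<in>I. 0 < x k) \<Longrightarrow> sum x I \<ge> 0" by (intro sum_nonneg) auto
    ultimately show ?thesis
      by (auto simp: ennreal_mult[symmetric] algebra_simps diff_diff_eq)
  qed
  have "(\<integral>\<^sup>+x. ?F x \<partial>PiM (insert j I) (\<lambda>_. lborel))
      = (\<integral>\<^sup>+y. \<integral>\<^sup>+x. ?F (x(j:=y)) \<partial>PiM I (\<lambda>_. lborel) \<partial>lborel)"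
    using I meas by (intro product_nn_integral_insert_rev) auto
  also have "\<dots> = (\<integral>\<^sup>+y. ennreal ?C * ennreal (if 0 < y \<and> y < 1 \<and> y \<le> c then y powr (a j - 1) * (1-y) powr (sum a I + b - 1) else 0) \<partial>lborel)"
  proof (intro nn_integral_cong)
    fix y :: real
    have "(\<integral>\<^sup>+x. ?F (x(j:=y)) \<partial>PiM I (\<lambda>_. lborel)) = ennreal (if 0 < y \<and> y < 1 \<and> y \<le> c then y powr (a j - 1) else 0) * 
        (\<integral>\<^sup>+x. ?G (1-y) x \<partial>PiM I (\<lambda>_. lborel))"
      unfolding pt using I by (subst nn_integral_cmult) auto
    also have "\<dots> = ennreal ?C * ennreal (if 0 < y \<and> y < 1 \<and> y \<le> c then y powr (a j - 1) * (1-y) powr (sum a I + b - 1) else 0)"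
    proof (cases "0 < y \<and> y < 1 \<and> y \<le> c")
      case True
      have "(\<integral>\<^sup>+x. ?G (1-y) x \<partial>PiM I (\<lambda>_. lborel)) = ennreal ((1-y) powr (sum a I + b - 1) * ?C)"
        using simplex_integral[OF I(1), of a b "1-y"] apos b True by (simp add: mult_ac)
      moreover have "ennreal (y powr (a j - 1)) * ennreal ((1-y) powr (sum a I + b - 1) * ?C) = ennreal (y powr (a j - 1) * ((1-y) powr (sum a I + b - 1) * ?C))"
        by (rule ennreal_mult'[symmetric]) simp
      moreover have "ennreal ?C * ennreal (y powr (a j - 1) * (1-y) powr (sum a I + b - 1)) = ennreal (?C * (y powr (a j - 1) * (1-y) powr (sum a I + b - 1)))"
        by (rule ennreal_mult'[symmetric]) (rule Cnn)
      ultimately show ?thesis using True by (simp add: mult_ac)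
    qed auto
    finally show "(\<integral>\<^sup>+x. ?F (x(j:=y)) \<partial>PiM I (\<lambda>_. lborel)) = ennreal ?C * ennreal (if 0 < y \<and> y < 1 \<and> y \<le> c then y powr (a j - 1) * (1-y) powr (sum a I + b - 1) else 0)" .
  qed
  also have "\<dots> = ennreal ?C * (\<integral>\<^sup>+t. ennreal (if 0 < t \<and> t < 1 \<and> t \<le> c then t powr (a j - 1) * (1-t) powr (sum a I + b - 1) else 0) \<partial>lborel)"
    by (intro nn_integral_cmult) measurable
  finally show ?thesis .
qed

definition dI :: "nat \<Rightarrow> (nat \<Rightarrow> real) \<Rightarrow> ((nat \<Rightarrow> real) \<Rightarrow> bool) \<Rightarrow> (nat \<Rightarrow> real) \<Rightarrow> ennreal" where
  "dI K \<alpha> Q x = ennreal (if (\<forall>k\<in>{1..<K}. 0 < x k) \<and> sum x {1..<K} < 1 \<and> Q x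
     then (\<Prod>k\<in>{1..<K}. x k powr (\<alpha> k - 1)) * (1 - sum x {1..<K}) powr (\<alpha> K - 1) else 0)"

definition BP :: "real \<Rightarrow> real \<Rightarrow> real \<Rightarrow> ennreal" where
  "BP a b c = (\<integral>\<^sup>+t. ennreal (if 0 < t \<and> t < 1 \<and> t \<le> c then t powr (a - 1) * (1-t) powr (b - 1) else 0) \<partial>lborel)"

lemma case_lt:
  assumes K: "2 \<le> K" and apos: "\<forall>k\<in>{1..K}. 0 < \<alpha> k" and i: "i \<in> {1..<K}"
  shows "(\<integral>\<^sup>+x. dI K \<alpha> (\<lambda>x. x i \<le> c) x \<partial>PiM {1..<K} (\<lambda>_. lborel))
    = ennreal ((\<Prod>k\<in>{1..K}-{i}. Gamma (\<alpha> k)) / Gamma (sum \<alpha> ({1..K}-{i}))) * BP (\<alpha> i) (sum \<alpha> ({1..K}-{i})) c"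
proof -
  define I where "I = {1..<K} - {i}"
  have I: "finite I" "i \<notin> I" "insert i I = {1..<K}" using i by (auto simp: I_def)
  have e: "{1..K}-{i} = insert K I" "K \<notin> I" using i by (auto simp: I_def)
  have "(\<integral>\<^sup>+x. dI K \<alpha> (\<lambda>x. x i \<le> c) x \<partial>PiM {1..<K} (\<lambda>_. lborel))
     = (\<integral>\<^sup>+x. ennreal (if (\<forall>k\<in>insert i I. 0 < x k) \<and> sum x (insert i I) < 1 \<and> x i \<le> c
            then (\<Prod>k\<in>insert i I. x k powr (\<alpha> k - 1)) * (1 - sum x (insert i I)) powr (\<alpha> K - 1) else 0)
          \<partial>PiM (insert i I) (\<lambda>_. lborel))"
    unfolding I(3) dI_def by (simp add: conj_assoc)
  also have "\<dots> = ennreal ((\<Prod>k\<in>I. Gamma (\<alpha> k)) * Gamma (\<alpha> K) / Gamma (sum \<alpha> I + \<alpha> K)) *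
     (\<integral>\<^sup>+t. ennreal (if 0 < t \<and> t < 1 \<and> t \<le> c then t powr (\<alpha> i - 1) * (1-t) powr (sum \<alpha> I + \<alpha> K - 1) else 0) \<partial>lborel)"
    by (rule marginal) (use I apos i in auto)
  also have "\<dots> = ennreal ((\<Prod>k\<in>{1..K}-{i}. Gamma (\<alpha> k)) / Gamma (sum \<alpha> ({1..K}-{i}))) * BP (\<alpha> i) (sum \<alpha> ({1..K}-{i})) c"
  proof -
    have q: "sum \<alpha> (insert K I) = sum \<alpha> I + \<alpha> K" "prod (\<lambda>k. Gamma (\<alpha> k)) (insert K I) = (\<Prod>k\<in>I. Gamma (\<alpha> k)) * Gamma (\<alpha> K)"
      using e(2) I(1) by (simp_all add: mult_ac)
    show ?thesis unfolding e(1) BP_def q ..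
  qed
  finally show ?thesis .
qed

lemma dI_upd:
  fixes \<alpha> :: "nat \<Rightarrow> real"
  assumes K: "2 \<le> K"
  shows "dI K \<alpha> Q (x(1:=y)) = ennreal (if (\<forall>k\<in>{2..<K}. 0 < x k) \<and> 0 < y \<and> y + sum x {2..<K} < 1 \<and> Q (x(1:=y))
     then y powr (\<alpha> 1 - 1) * (\<Prod>k\<in>{2..<K}. x k powr (\<alpha> k - 1)) * (1 - (y + sum x {2..<K})) powr (\<alpha> K - 1) else 0)"
proof -
  have e: "{1..<K} = insert 1 {2..<K}" "1 \<notin> {2..<K}" using K by auto
  have s1: "sum (x(1:=y)) {2..<K} = sum x {2..<K}" by (intro sum.cong) auto
  have p1: "(\<Prod>k\<in>{2..<K}. (x(1:=y)) k powr (\<alpha> k - 1)) = (\<Prod>k\<in>{2..<K}. x k powr (\<alpha> k - 1))"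
    by (intro prod.cong) auto
  have "(\<forall>k\<in>{1..<K}. 0 < (x(1:=y)) k) = (0 < y \<and> (\<forall>k\<in>{2..<K}. 0 < x k))" unfolding e by auto
  moreover have "sum (x(1:=y)) {1..<K} = y + sum x {2..<K}" unfolding e using s1 by simp
  moreover have "(\<Prod>k\<in>{1..<K}. (x(1:=y)) k powr (\<alpha> k - 1)) = y powr (\<alpha> 1 - 1) * (\<Prod>k\<in>{2..<K}. x k powr (\<alpha> k - 1))"
    unfolding e using p1 by simp
  ultimately show ?thesis unfolding dI_def by (simp add: conj_ac)
qed

lemma reflect:
  fixes \<alpha> :: "nat \<Rightarrow> real"
  assumes K: "2 \<le> K"
  shows "(\<integral>\<^sup>+x. dI K \<alpha> (\<lambda>x. 1 - sum x {1..<K} \<le> c) x \<partial>PiM {1..<K} (\<lambda>_. lborel))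
       = (\<integral>\<^sup>+x. dI K (\<alpha>(1 := \<alpha> K, K := \<alpha> 1)) (\<lambda>x. x 1 \<le> c) x \<partial>PiM {1..<K} (\<lambda>_. lborel))"
proof -
  interpret product_sigma_finite "\<lambda>_. lborel" by standard
  define J where "J = {2..<K}"
  have e: "{1..<K} = insert 1 J" "1 \<notin> J" "K \<notin> J" "finite J" using K by (auto simp: J_def)
  define \<alpha>' where "\<alpha>' = \<alpha>(1 := \<alpha> K, K := \<alpha> 1)"
  have a': "\<alpha>' 1 = \<alpha> K" "\<alpha>' K = \<alpha> 1" "\<And>k. k \<in> J \<Longrightarrow> \<alpha>' k = \<alpha> k" using K by (auto simp: \<alpha>'_def J_def)
  have pJ: "(\<Prod>k\<in>J. x k powr (\<alpha>' k - 1)) = (\<Prod>k\<in>J. x k powr (\<alpha> k - 1))" for x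
    using a'(3) by (intro prod.cong) auto
  have m1: "dI K \<alpha> (\<lambda>x. 1 - sum x {1..<K} \<le> c) \<in> borel_measurable (PiM {1..<K} (\<lambda>_. lborel))"
    unfolding dI_def by measurable
  have one[simp]: "1 \<in> {1..<K}" "1 < K" "Suc 0 < K" using K by simp_all
  have m2: "dI K \<alpha>' (\<lambda>x. x 1 \<le> c) \<in> borel_measurable (PiM {1..<K} (\<lambda>_. lborel))"
    unfolding dI_def by measurable
  have inner: "(\<integral>\<^sup>+y. dI K \<alpha> (\<lambda>x. 1 - sum x {1..<K} \<le> c) (x(1:=y)) \<partial>lborel)
      = (\<integral>\<^sup>+y. dI K \<alpha>' (\<lambda>x. x 1 \<le> c) (x(1:=y)) \<partial>lborel)" for x
  proof -
    let ?S = "sum x J" and ?P = "\<Prod>k\<in>J. x k powr (\<alpha> k - 1)"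
    have sJ: "sum (x(1:=y)) {1..<K} = y + ?S" for y
    proof -
      have "sum (x(1:=y)) J = sum x J" using e(2) by (intro sum.cong) auto
      then show ?thesis unfolding e(1) using e(2,4) by simp
    qed
    let ?f = "\<lambda>y. ennreal (if (\<forall>k\<in>J. 0 < x k) \<and> 0 < y \<and> y + ?S < 1 \<and> 1 - (y + ?S) \<le> c
     then y powr (\<alpha> 1 - 1) * ?P * (1 - (y + ?S)) powr (\<alpha> K - 1) else 0)"
    have "(\<integral>\<^sup>+y. dI K \<alpha> (\<lambda>x. 1 - sum x {1..<K} \<le> c) (x(1:=y)) \<partial>lborel) = (\<integral>\<^sup>+y. ?f y \<partial>lborel)"
      unfolding dI_upd[OF K] sJ J_def ..
    also have "\<dots> = ennreal \<bar>-1\<bar> * (\<integral>\<^sup>+y. ?f ((1 - ?S) + (-1) * y) \<partial>lborel)"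
      by (intro nn_integral_real_affine) auto
    also have "\<dots> = (\<integral>\<^sup>+y. dI K \<alpha>' (\<lambda>x. x 1 \<le> c) (x(1:=y)) \<partial>lborel)"
      unfolding dI_upd[OF K] J_def[symmetric] fun_upd_same using pJ a' by (auto simp: algebra_simps intro!: nn_integral_cong)
    finally show ?thesis .
  qed
  have "(\<integral>\<^sup>+x. dI K \<alpha> (\<lambda>x. 1 - sum x {1..<K} \<le> c) x \<partial>PiM {1..<K} (\<lambda>_. lborel))
     = (\<integral>\<^sup>+x. \<integral>\<^sup>+y. dI K \<alpha> (\<lambda>x. 1 - sum x {1..<K} \<le> c) (x(1:=y)) \<partial>lborel \<partial>PiM J (\<lambda>_. lborel))"
    using m1 unfolding e(1) by (intro product_nn_integral_insert) (use e in auto)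
  also have "\<dots> = (\<integral>\<^sup>+x. \<integral>\<^sup>+y. dI K \<alpha>' (\<lambda>x. x 1 \<le> c) (x(1:=y)) \<partial>lborel \<partial>PiM J (\<lambda>_. lborel))"
    by (rule nn_integral_cong) (rule inner)
  also have "\<dots> = (\<integral>\<^sup>+x. dI K \<alpha>' (\<lambda>x. x 1 \<le> c) x \<partial>PiM {1..<K} (\<lambda>_. lborel))"
    using m2 unfolding e(1) by (intro product_nn_integral_insert[symmetric]) (use e in auto)
  finally show ?thesis unfolding \<alpha>'_def .
qed

lemma case_K:
  fixes \<alpha> :: "nat \<Rightarrow> real"
  assumes K: "2 \<le> K" and apos: "\<forall>k\<in>{1..K}. 0 < \<alpha> k"
  shows "(\<integral>\<^sup>+x. dI K \<alpha> (\<lambda>x. 1 - sum x {1..<K} \<le> c) x \<partial>PiM {1..<K} (\<lambda>_. lborel))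
    = ennreal ((\<Prod>k\<in>{1..K}-{K}. Gamma (\<alpha> k)) / Gamma (sum \<alpha> ({1..K}-{K}))) * BP (\<alpha> K) (sum \<alpha> ({1..K}-{K})) c"
proof -
  define \<alpha>' where "\<alpha>' = \<alpha>(1 := \<alpha> K, K := \<alpha> 1)"
  define J where "J = {2..<K}"
  have a': "\<alpha>' 1 = \<alpha> K" "\<alpha>' K = \<alpha> 1" "\<And>k. k \<in> J \<Longrightarrow> \<alpha>' k = \<alpha> k" using K by (auto simp: \<alpha>'_def J_def)
  have e: "{1..K}-{1} = insert K J" "{1..K}-{K} = insert 1 J" "1 \<notin> J" "K \<notin> J" "finite J" using K by (auto simp: J_def)
  have apos': "\<forall>k\<in>{1..K}. 0 < \<alpha>' k" using apos K by (auto simp: \<alpha>'_def)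
  have sJ: "sum \<alpha>' J = sum \<alpha> J" using a'(3) by (intro sum.cong) auto
  have pJ: "(\<Prod>k\<in>J. Gamma (\<alpha>' k)) = (\<Prod>k\<in>J. Gamma (\<alpha> k))" using a'(3) by (intro prod.cong) auto
  have s1: "sum \<alpha>' ({1..K}-{1}) = sum \<alpha> ({1..K}-{K})" unfolding e(1,2) using e sJ a' by simp
  have p1: "(\<Prod>k\<in>{1..K}-{1}. Gamma (\<alpha>' k)) = (\<Prod>k\<in>{1..K}-{K}. Gamma (\<alpha> k))" unfolding e(1,2) using e pJ a' by simp
  have "(\<integral>\<^sup>+x. dI K \<alpha> (\<lambda>x. 1 - sum x {1..<K} \<le> c) x \<partial>PiM {1..<K} (\<lambda>_. lborel))
     = (\<integral>\<^sup>+x. dI K \<alpha>' (\<lambda>x. x 1 \<le> c) x \<partial>PiM {1..<K} (\<lambda>_. lborel))"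
    unfolding \<alpha>'_def by (rule reflect[OF K])
  also have "\<dots> = ennreal ((\<Prod>k\<in>{1..K}-{1}. Gamma (\<alpha>' k)) / Gamma (sum \<alpha>' ({1..K}-{1}))) * BP (\<alpha>' 1) (sum \<alpha>' ({1..K}-{1})) c"
    by (rule case_lt[OF K apos']) (use K in auto)
  finally show ?thesis unfolding s1 p1 a'(1) .
qed

lemma BP_lbint:
  assumes a: "a > 0" and b: "b > 0" and c: "0 \<le> c" "c \<le> 1"
  shows "BP a b c = ennreal (LBINT t=0..c. t powr (a-1) * (1-t) powr (b-1))"
proof -
  have "BP a b c = (\<integral>\<^sup>+t. ennreal (if 0 < t \<and> t < c then t powr (a-1) * (1-t) powr (b-1) else 0) \<partial>lborel)"
    unfolding BP_def
  proof (intro nn_integral_cong_AE)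
    show "AE t in lborel. ennreal (if 0 < t \<and> t < 1 \<and> t \<le> c then t powr (a - 1) * (1 - t) powr (b - 1) else 0) =
         ennreal (if 0 < t \<and> t < c then t powr (a - 1) * (1 - t) powr (b - 1) else 0)"
      using AE_lborel_singleton[of c] by eventually_elim (use c in auto)
  qed
  also have "\<dots> = ennreal (LBINT t=0..c. t powr (a-1) * (1-t) powr (b-1))"
    by (rule beta_lbint[OF a b c])
  finally show ?thesis .
qed

lemma comp_meas:
  "dirichlet_complete K \<in> PiM {1..<K} (\<lambda>_. lborel) \<rightarrow>\<^sub>M PiM {1..K} (\<lambda>_. lborel)"
  unfolding dirichlet_complete_def
proof (intro measurable_restrict)
  fix k assume k: "k \<in> {1..K}"
  show "(\<lambda>x. if k = K then 1 - sum x {1..<K} else x k) \<in> PiM {1..<K} (\<lambda>_. lborel) \<rightarrow>\<^sub>M lborel"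
    unfolding measurable_lborel2
  proof (cases "k = K")
    case False
    then have "k \<in> {1..<K}" using k by auto
    then show ?thesis using False by simp
  qed simp
qed

lemma dir_prob:
  fixes \<alpha> :: "nat \<Rightarrow> real"
  assumes K: "2 \<le> K" and apos: "\<forall>k\<in>{1..K}. 0 < \<alpha> k" and i: "i \<in> {1..K}"
    and c: "0 \<le> c" "c \<le> 1"
  shows "emeasure (dirichlet K \<alpha>) {x \<in> space (PiM {1..K} (\<lambda>_. lborel)). x i \<le> c \<or> \<not> (\<forall>k\<in>{1..K}. 0 \<le> x k) \<or> sum x {1..K} \<noteq> 1}
    = ennreal ((LBINT t=0..c. t powr (\<alpha> i - 1) * (1 - t) powr ((\<Sum>j\<in>{1..K}-{i}. \<alpha> j) - 1))
        / (LBINT t=0..1. t powr (\<alpha> i - 1) * (1 - t) powr ((\<Sum>j\<in>{1..K}-{i}. \<alpha> j) - 1)))"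
proof -
  let ?N = "PiM {1..<K} (\<lambda>_. lborel::real measure)"
  let ?L = "PiM {1..K} (\<lambda>_. lborel::real measure)"
  define A where "A = {x \<in> space ?L. x i \<le> c \<or> \<not> (\<forall>k\<in>{1..K}. 0 \<le> x k) \<or> sum x {1..K} \<noteq> 1}"
  define R where "R = (\<Sum>j\<in>{1..K}-{i}. \<alpha> j)"
  define Cd where "Cd = Gamma (\<Sum>k\<in>{1..K}. \<alpha> k) / (\<Prod>k\<in>{1..K}. Gamma (\<alpha> k))"
  define Gi where "Gi = (\<Prod>k\<in>{1..K}-{i}. Gamma (\<alpha> k)) / Gamma R"
  have i1: "i \<in> {1..K}" using i .
  have Apos: "\<alpha> i > 0" using apos i by auto
  have ne: "{1..K}-{i} \<noteq> {}"
  proof (cases "i = 1")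
    case True then have "K \<in> {1..K}-{i}" using K by auto
    then show ?thesis by blast
  next
    case False then have "1 \<in> {1..K}-{i}" using K by auto
    then show ?thesis by blast
  qed
  have Rpos: "R > 0" unfolding R_def using apos ne
    by (intro sum_pos) auto
  have sumeq: "(\<Sum>k\<in>{1..K}. \<alpha> k) = \<alpha> i + R" unfolding R_def using sum.remove[of "{1..K}" i \<alpha>] i by simp
  have prodeq: "(\<Prod>k\<in>{1..K}. Gamma (\<alpha> k)) = Gamma (\<alpha> i) * (\<Prod>k\<in>{1..K}-{i}. Gamma (\<alpha> k))"
    using prod.remove[of "{1..K}" i "\<lambda>k. Gamma (\<alpha> k)"] i by simp
  have Pp: "(\<Prod>k\<in>{1..K}-{i}. Gamma (\<alpha> k)) > 0" using apos by (intro prod_pos) (auto intro: Gamma_real_pos)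
  have G1: "Gamma (\<alpha> i) > 0" "Gamma R > 0" "Gamma (\<alpha> i + R) > 0" using Apos Rpos by (auto intro: Gamma_real_pos)
  have Cd_nn: "Cd \<ge> 0" unfolding Cd_def sumeq prodeq using G1 Pp by simp
  have CdGi: "Cd * Gi = 1 / Beta (\<alpha> i) R"
  proof -
    have gen: "z / (x * P) * (P / y) = 1 / (x * y / z)" if "P > 0" "x > 0" "y > 0" "z > 0" for P x y z :: real
      using that by (simp add: field_simps)
    show ?thesis unfolding Cd_def Gi_def Beta_def sumeq prodeq by (rule gen[OF Pp G1(1,2,3)])
  qed
  have Ameas: "A \<in> sets ?L" unfolding A_def using i by measurable
  have Dmeas: "(\<lambda>x. ennreal (dirichlet_density K \<alpha> x)) \<in> borel_measurable ?N"
    unfolding dirichlet_density_def by measurable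
  have cm: "dirichlet_complete K \<in> density ?N (\<lambda>x. ennreal (dirichlet_density K \<alpha> x)) \<rightarrow>\<^sub>M ?L"
  proof -
    have "measurable (density ?N (\<lambda>x. ennreal (dirichlet_density K \<alpha> x))) ?L = measurable ?N ?L"
      by (rule measurable_cong_sets) simp_all
    then show ?thesis using comp_meas by simp
  qed
  have compi: "dirichlet_complete K x i = (if i = K then 1 - sum x {1..<K} else x i)" for x
    using i by (simp add: dirichlet_complete_def)
  have "emeasure (dirichlet K \<alpha>) A = emeasure (density ?N (\<lambda>x. ennreal (dirichlet_density K \<alpha> x))) (dirichlet_complete K -` A \<inter> space ?N)"
    unfolding dirichlet_def by (subst emeasure_distr[OF cm Ameas]) simp
  also have "\<dots> = (\<integral>\<^sup>+x. ennreal (dirichlet_density K \<alpha> x) * indicator (dirichlet_complete K -` A \<inter> space ?N) x \<partial>?N)"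
    by (rule emeasure_density[OF Dmeas]) (use comp_meas Ameas in measurable)
  also have "\<dots> = (\<integral>\<^sup>+x. ennreal Cd * dI K \<alpha> (\<lambda>x. dirichlet_complete K x i \<le> c) x \<partial>?N)"
  proof (intro nn_integral_cong)
    fix x assume x: "x \<in> space ?N"
    show "ennreal (dirichlet_density K \<alpha> x) * indicator (dirichlet_complete K -` A \<inter> space ?N) x = ennreal Cd * dI K \<alpha> (\<lambda>x. dirichlet_complete K x i \<le> c) x"
    proof (cases "(\<forall>k\<in>{1..<K}. 0 < x k) \<and> sum x {1..<K} < 1")
      case True
      let ?y = "dirichlet_complete K x"
      have ysp: "?y \<in> space ?L" unfolding dirichlet_complete_def by (simp add: space_PiM)
      have ypos: "\<forall>k\<in>{1..K}. 0 \<le> ?y k"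
      proof
        fix k assume k: "k \<in> {1..K}"
        show "0 \<le> ?y k"
        proof (cases "k = K")
          case False then have "k \<in> {1..<K}" using k by auto
          then show ?thesis using True k False by (auto simp: dirichlet_complete_def less_imp_le)
        qed (use True k in \<open>auto simp: dirichlet_complete_def\<close>)
      qed
      have "sum ?y {1..K} = sum ?y {1..<K} + ?y K" using K by (simp add: atLeastLessThanSuc_atLeastAtMost[symmetric] del: atLeastLessThanSuc_atLeastAtMost)
      also have "sum ?y {1..<K} = sum x {1..<K}" by (intro sum.cong) (auto simp: dirichlet_complete_def)
      finally have ysum: "sum ?y {1..K} = 1" using K by (simp add: dirichlet_complete_def)
      have ind: "indicator (dirichlet_complete K -` A \<inter> space ?N) x = (if ?y i \<le> c then 1 else (0::ennreal))"
        using ysp ypos ysum x by (auto simp: A_def indicator_def)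
      define X where "X = (\<Prod>k\<in>{1..<K}. x k powr (\<alpha> k - 1)) * (1 - sum x {1..<K}) powr (\<alpha> K - 1)"
      have Xnn: "X \<ge> 0" unfolding X_def by (intro mult_nonneg_nonneg prod_nonneg) auto
      have dd: "dirichlet_density K \<alpha> x = Cd * X" using True unfolding dirichlet_density_def Cd_def X_def by simp
      have di: "dI K \<alpha> (\<lambda>x. dirichlet_complete K x i \<le> c) x = (if ?y i \<le> c then ennreal X else 0)"
        using True unfolding dI_def X_def by simp
      show ?thesis unfolding dd di ind using Cd_nn Xnn by (simp add: ennreal_mult)
    next
      case False
      then have "dirichlet_density K \<alpha> x = 0" "dI K \<alpha> (\<lambda>x. dirichlet_complete K x i \<le> c) x = 0"
        unfolding dirichlet_density_def dI_def by auto
      then show ?thesis by simp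
    qed
  qed
  also have "\<dots> = ennreal Cd * (\<integral>\<^sup>+x. dI K \<alpha> (\<lambda>x. dirichlet_complete K x i \<le> c) x \<partial>?N)"
  proof (rule nn_integral_cmult)
    show "dI K \<alpha> (\<lambda>x. dirichlet_complete K x i \<le> c) \<in> borel_measurable ?N"
    proof (cases "i = K")
      case True
      have eq: "(\<lambda>x. dirichlet_complete K x i \<le> c) = (\<lambda>x. 1 - sum x {1..<K} \<le> c)"
        using compi True by simp
      show ?thesis unfolding eq dI_def by measurable
    next
      case False
      have eq: "(\<lambda>x. dirichlet_complete K x i \<le> c) = (\<lambda>x. x i \<le> c)"
        using compi False by simp
      have ii: "i \<in> {1..<K}" using i False by auto
      show ?thesis unfolding eq dI_def using ii by measurable
    qed
  qed
  also have "(\<integral>\<^sup>+x. dI K \<alpha> (\<lambda>x. dirichlet_complete K x i \<le> c) x \<partial>?N) = ennreal Gi * BP (\<alpha> i) R c"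
  proof (cases "i = K")
    case True
    have "(\<lambda>x. dirichlet_complete K x i \<le> c) = (\<lambda>x. 1 - sum x {1..<K} \<le> c)" using compi True by simp
    then show ?thesis unfolding Gi_def R_def using case_K[OF K apos, of c] True by simp
  next
    case False
    have "(\<lambda>x. dirichlet_complete K x i \<le> c) = (\<lambda>x. x i \<le> c)" using compi False by simp
    moreover have "i \<in> {1..<K}" using i False by auto
    ultimately show ?thesis unfolding Gi_def R_def using case_lt[OF K apos, of i c] by simp
  qed
  also have "BP (\<alpha> i) R c = ennreal (LBINT t=0..c. t powr (\<alpha> i - 1) * (1 - t) powr (R - 1))"
    by (rule BP_lbint[OF Apos Rpos c])
  also have "ennreal Cd * (ennreal Gi * ennreal (LBINT t=0..c. t powr (\<alpha> i - 1) * (1 - t) powr (R - 1)))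
      = ennreal ((LBINT t=0..c. t powr (\<alpha> i - 1) * (1 - t) powr (R - 1)) / Beta (\<alpha> i) R)"
  proof -
    have "Gi \<ge> 0" unfolding Gi_def using Pp G1 by simp
    moreover have "(LBINT t=0..c. t powr (\<alpha> i - 1) * (1 - t) powr (R - 1)) \<ge> 0"
      using c by (simp add: interval_integral_Ioo set_lebesgue_integral_def indicator_def)
    ultimately show ?thesis using Cd_nn CdGi
      by (simp add: ennreal_mult[symmetric] mult.assoc[symmetric])
  qed
  finally show ?thesis unfolding A_def R_def[symmetric] beta_lbint1[OF Apos Rpos] .
qed




lemma geom:
  fixes \<beta> :: "nat \<Rightarrow> real ^ 'v" and x :: "nat \<Rightarrow> real"
  assumes i: "i \<in> {1..K}" and xpos: "\<forall>k\<in>{1..K}. 0 \<le> x k" and xs: "sum x {1..K} = 1"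
    and bd: "\<forall>k\<in>{1..K}. norm (\<beta> i - \<beta> k) \<le> M" and M: "M > 0"
    and far: "\<epsilon> \<le> norm (\<beta> i - (\<Sum>k\<in>{1..K}. x k *\<^sub>R \<beta> k))"
  shows "x i \<le> 1 - \<epsilon> / M"
proof -
  have "(\<Sum>k\<in>{1..K}. x k *\<^sub>R \<beta> k) - \<beta> i = (\<Sum>k\<in>{1..K}. x k *\<^sub>R (\<beta> k - \<beta> i))"
  proof -
    have "(\<Sum>k\<in>{1..K}. x k *\<^sub>R (\<beta> k - \<beta> i)) = (\<Sum>k\<in>{1..K}. x k *\<^sub>R \<beta> k) - (\<Sum>k\<in>{1..K}. x k) *\<^sub>R \<beta> i"
      by (simp add: scaleR_diff_right sum_subtractf scaleR_sum_left)
    then show ?thesis using xs by simp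
  qed
  then have "norm (\<beta> i - (\<Sum>k\<in>{1..K}. x k *\<^sub>R \<beta> k)) = norm (\<Sum>k\<in>{1..K}. x k *\<^sub>R (\<beta> k - \<beta> i))"
    by (metis norm_minus_commute)
  also have "\<dots> \<le> (\<Sum>k\<in>{1..K}. norm (x k *\<^sub>R (\<beta> k - \<beta> i)))" by (rule norm_sum)
  also have "\<dots> = (\<Sum>k\<in>{1..K}. x k * norm (\<beta> i - \<beta> k))"
    using xpos by (intro sum.cong) (auto simp: norm_minus_commute)
  also have "\<dots> = x i * norm (\<beta> i - \<beta> i) + (\<Sum>k\<in>{1..K}-{i}. x k * norm (\<beta> i - \<beta> k))"
    using sum.remove[of "{1..K}" i "\<lambda>k. x k * norm (\<beta> i - \<beta> k)"] i by simp
  also have "\<dots> \<le> 0 + (\<Sum>k\<in>{1..K}-{i}. x k * M)"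
    using xpos bd by (intro add_mono sum_mono mult_left_mono) auto
  also have "\<dots> = (1 - x i) * M"
    using sum.remove[of "{1..K}" i x] i xs by (simp add: sum_distrib_right[symmetric])
  finally have "\<epsilon> \<le> (1 - x i) * M" using far by linarith
  then show ?thesis using M by (simp add: field_simps)
qed


theorem lemma1:
  fixes P :: "'a measure"
    and K Mn :: nat
    and \<alpha> :: "nat \<Rightarrow> real"
    and \<beta> :: "nat \<Rightarrow> real ^ 'v"
    and \<theta> :: "nat \<Rightarrow> 'a \<Rightarrow> (nat \<Rightarrow> real)"
    and i :: nat and \<epsilon> :: real
  assumes K2: "2 \<le> K"
    and alpha_pos: "\<forall>k\<in>{1..K}. 0 < \<alpha> k"
    and topics: "\<forall>k\<in>{1..K}. (\<forall>j. 0 \<le> \<beta> k $ j) \<and> (\<Sum>j\<in>UNIV. \<beta> k $ j) = 1"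
    and P: "prob_space P"
    and indep: "prob_space.indep_vars P (\<lambda>_. PiM {1..K} (\<lambda>_. lborel)) \<theta> {1..Mn}"
    and distr: "\<forall>m\<in>{1..Mn}. distr P (PiM {1..K} (\<lambda>_. lborel)) (\<theta> m) = dirichlet K \<alpha>"
    and i: "i \<in> {1..K}"
    and eps: "0 < \<epsilon>" "\<epsilon> < Max {norm (\<beta> i - \<beta> k) | k. k \<in> {1..K} \<and> k \<noteq> i}"
  shows "measure P {\<omega> \<in> space P. \<forall>m\<in>{1..Mn}.
            (\<Sum>k\<in>{1..K}. \<theta> m \<omega> k *\<^sub>R \<beta> k) \<notin> ball (\<beta> i) \<epsilon>}
     \<le> ((LBINT t=0..1 - \<epsilon> / Max {norm (\<beta> i - \<beta> k) | k. k \<in> {1..K} \<and> k \<noteq> i}.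
            t powr (\<alpha> i - 1) * (1 - t) powr ((\<Sum>j\<in>{1..K}-{i}. \<alpha> j) - 1))
        / (LBINT t=0..1. t powr (\<alpha> i - 1) * (1 - t) powr ((\<Sum>j\<in>{1..K}-{i}. \<alpha> j) - 1))) ^ Mn"
proof -
  interpret prob_space P by (rule P)
  define Am where "Am = Max {norm (\<beta> i - \<beta> k) | k. k \<in> {1..K} \<and> k \<noteq> i}"
  define c where "c = 1 - \<epsilon> / Am"
  define r where "r = (LBINT t=0..c. t powr (\<alpha> i - 1) * (1 - t) powr ((\<Sum>j\<in>{1..K}-{i}. \<alpha> j) - 1))
        / (LBINT t=0..1. t powr (\<alpha> i - 1) * (1 - t) powr ((\<Sum>j\<in>{1..K}-{i}. \<alpha> j) - 1))"
  let ?L = "PiM {1..K} (\<lambda>_. lborel::real measure)"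
  define A where "A = {x \<in> space ?L. x i \<le> c \<or> \<not> (\<forall>k\<in>{1..K}. 0 \<le> x k) \<or> sum x {1..K} \<noteq> 1}"
  have Am: "Am > \<epsilon>" using eps unfolding Am_def by simp
  have Am0: "Am > 0" using Am eps by simp
  have fin: "finite {norm (\<beta> i - \<beta> k) | k. k \<in> {1..K} \<and> k \<noteq> i}" by simp
  have bd: "\<forall>k\<in>{1..K}. norm (\<beta> i - \<beta> k) \<le> Am"
  proof
    fix k assume k: "k \<in> {1..K}"
    show "norm (\<beta> i - \<beta> k) \<le> Am"
    proof (cases "k = i")
      case True then show ?thesis using Am0 by simp
    next
      case False then show ?thesis unfolding Am_def using k by (intro Max_ge[OF fin]) auto
    qed
  qed
  have c: "0 \<le> c" "c \<le> 1" unfolding c_def using Am Am0 eps by (auto simp: field_simps)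
  have dp: "emeasure (dirichlet K \<alpha>) A = ennreal r"
    unfolding A_def r_def by (rule dir_prob[OF K2 alpha_pos i c])
  have Ameas: "A \<in> sets ?L" unfolding A_def using i by measurable
  have rnn: "r \<ge> 0"
  proof -
    have "(LBINT t=0..c. t powr (\<alpha> i - 1) * (1 - t) powr ((\<Sum>j\<in>{1..K}-{i}. \<alpha> j) - 1)) \<ge> 0"
      using c by (simp add: interval_integral_Ioo set_lebesgue_integral_def indicator_def)
    moreover have "(LBINT t=0..1. t powr (\<alpha> i - 1) * (1 - t) powr ((\<Sum>j\<in>{1..K}-{i}. \<alpha> j) - 1)) \<ge> 0"
      by (simp add: interval_integral_Ioo one_ereal_def set_lebesgue_integral_def indicator_def)
    ultimately show ?thesis unfolding r_def by simp
  qed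
  have rv: "\<forall>m\<in>{1..Mn}. random_variable ?L (\<theta> m)" and ind:
    "indep_sets (\<lambda>m. {\<theta> m -` X \<inter> space P | X. X \<in> sets ?L}) {1..Mn}"
    using indep unfolding indep_vars_def2 by auto
  have pm: "prob (\<theta> m -` A \<inter> space P) = r" if m: "m \<in> {1..Mn}" for m
  proof -
    have "prob (\<theta> m -` A \<inter> space P) = measure (distr P ?L (\<theta> m)) A"
      using rv m Ameas by (simp add: measure_distr)
    also have "\<dots> = measure (dirichlet K \<alpha>) A" using distr m by simp
    also have "\<dots> = r" using dp rnn by (simp add: measure_def)
    finally show ?thesis .
  qed
  show ?thesis
  proof (cases "Mn = 0")
    case True
    then show ?thesis by simp
  next
    case False
    let ?B = "\<Inter>m\<in>{1..Mn}. \<theta> m -` A \<inter> space P"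
    have sub: "{\<omega> \<in> space P. \<forall>m\<in>{1..Mn}. (\<Sum>k\<in>{1..K}. \<theta> m \<omega> k *\<^sub>R \<beta> k) \<notin> ball (\<beta> i) \<epsilon>} \<subseteq> ?B"
    proof
      fix \<omega> assume w: "\<omega> \<in> {\<omega> \<in> space P. \<forall>m\<in>{1..Mn}. (\<Sum>k\<in>{1..K}. \<theta> m \<omega> k *\<^sub>R \<beta> k) \<notin> ball (\<beta> i) \<epsilon>}"
      show "\<omega> \<in> ?B"
      proof
        fix m assume m: "m \<in> {1..Mn}"
        have sp: "\<theta> m \<omega> \<in> space ?L" using rv m w by (auto intro: measurable_space)
        have "\<theta> m \<omega> i \<le> c" if "\<forall>k\<in>{1..K}. 0 \<le> \<theta> m \<omega> k" "sum (\<theta> m \<omega>) {1..K} = 1"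
        proof -
          have "\<epsilon> \<le> norm (\<beta> i - (\<Sum>k\<in>{1..K}. \<theta> m \<omega> k *\<^sub>R \<beta> k))"
          proof -
            have "(\<Sum>k\<in>{1..K}. \<theta> m \<omega> k *\<^sub>R \<beta> k) \<notin> ball (\<beta> i) \<epsilon>" using w m by blast
            then have "\<not> dist (\<beta> i) (\<Sum>k\<in>{1..K}. \<theta> m \<omega> k *\<^sub>R \<beta> k) < \<epsilon>" by simp
            then show ?thesis by (simp add: dist_norm)
          qed
          then show ?thesis unfolding c_def by (intro geom[OF i that bd Am0])
        qed
        then show "\<omega> \<in> \<theta> m -` A \<inter> space P" using sp w unfolding A_def by auto
      qed
    qed
    have Bsets: "?B \<in> events"
      using rv Ameas False by (intro sets.finite_INT) (auto intro: measurable_sets)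
    have "measure P {\<omega> \<in> space P. \<forall>m\<in>{1..Mn}. (\<Sum>k\<in>{1..K}. \<theta> m \<omega> k *\<^sub>R \<beta> k) \<notin> ball (\<beta> i) \<epsilon>} \<le> prob ?B"
      by (rule finite_measure_mono[OF sub Bsets])
    also have "prob ?B = (\<Prod>m\<in>{1..Mn}. prob (\<theta> m -` A \<inter> space P))"
      by (rule indep_setsD[OF ind]) (use False Ameas in auto)
    also have "\<dots> = r ^ Mn" using pm by simp
    finally show ?thesis unfolding r_def c_def Am_def .
  qed
qed

end
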